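(* Let $\{a_n\}_{n\ge 0}$ be a sequence of positive real numbers. Suppose there are real numbers $c>0$ and $0<\alpha\le\beta$ such that $\mathscr{R}^2 a_n = a_na_{n+2}/a_{n+1}^2$ has a Puiseux-type approximation of the form \[ \mathscr{R}^2 a_n = 1+\frac{c}{n^{\alpha}}+\cdots+o\!\left(\frac{1}{n^{\beta}}\right), \] i.e. there exist an integer $m\ge 1$, real exponents $\alpha=\alpha_1<\alpha_2<\cdots<\alpha_m$ and real coefficients $c_1=c,c_2,\dots,c_m$ such that $\lim_{n\to\infty} n^{\beta}\bigl(\mathscr{R}^2a_n-1-\sum_{i=1}^m c_i n^{-\alpha_i}\bigr)=0$. Then $\{a_n\}_{n\ge0}$ is asymptotically $r$-log-convex for \[ r=\begin{cases}\lfloor \beta/\alpha\rfloor, & \text{if } \alpha<2,\\[3pt] \left\lfloor \frac{\beta-\alpha}{2}\right\rfloor+1, & \text{if } \alpha\ge 2.\end{cases} \]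
   Context: $\mathscr{L}a_n=a_na_{n+2}-a_{n+1}^2$ and $\mathscr{L}^k a_n=\mathscr{L}(\mathscr{L}^{k-1}a_n)$. A sequence is $r$-log-convex if $\{\mathscr{L}a_n\},\{\mathscr{L}^2a_n\},\dots,\{\mathscr{L}^r a_n\}$ are all nonnegative sequences; it is asymptotically $r$-log-convex if there is $N$ such that $\mathscr{L}^k a_n\ge 0$ for all $k=1,\dots,r$ and all $n\ge N$. A Puiseux-type approximation of $f_n$ is $g_n=\sum_{i=0}^m c_i n^{-\alpha_i}$ ($\alpha_0<\cdots<\alpha_m$) with $n^{\alpha_m}(f_n-g_n)\to 0$; trailing terms are abbreviated with little-o notation. $\lfloor x\rfloor$ is the floor of $x$. *)

theory Defs
  imports Complex_Main
begin

definition Lop :: "(nat \<Rightarrow> real) \<Rightarrow> (nat \<Rightarrow> real)" where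
  "Lop a = (\<lambda>n. a n * a (n + 2) - (a (n + 1))\<^sup>2)"

definition asymp_r_log_convex :: "nat \<Rightarrow> (nat \<Rightarrow> real) \<Rightarrow> bool" where
  "asymp_r_log_convex r a \<longleftrightarrow>
     (\<exists>N. \<forall>k\<in>{1..r}. \<forall>n\<ge>N. (Lop ^^ k) a n \<ge> 0)"

end

theory Submission
  imports Defs
begin


definition dif :: "(nat \<Rightarrow> real) \<Rightarrow> nat \<Rightarrow> real" where
  "dif u = (\<lambda>n. u (Suc n) - u n)"

definition bnd :: "(nat \<Rightarrow> real) \<Rightarrow> real \<Rightarrow> bool" where
  "bnd u s \<longleftrightarrow> (\<exists>K\<ge>0. eventually (\<lambda>n. \<bar>u n\<bar> \<le> K * real n powr (-s)) sequentially)"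

definition SJ :: "nat \<Rightarrow> (nat \<Rightarrow> real) \<Rightarrow> real \<Rightarrow> bool" where
  "SJ J u s \<longleftrightarrow> (\<forall>i\<le>J. bnd ((dif ^^ i) u) (s + real i))"

definition Sc :: "(nat \<Rightarrow> real) \<Rightarrow> real \<Rightarrow> bool" where
  "Sc u s \<longleftrightarrow> (\<forall>J. SJ J u s)"

lemma dif_Suc: "(dif ^^ Suc i) u = (dif ^^ i) (dif u)"
  unfolding funpow_Suc_right by simp

lemma dif_comm: "dif ((dif ^^ i) u) = (dif ^^ i) (dif u)"
  using dif_Suc[of i u] by simp

lemma dif_add: "(dif ^^ i) (\<lambda>n. u n + v n) = (\<lambda>n. (dif ^^ i) u n + (dif ^^ i) v n)"
  by (induction i) (auto simp: dif_def)

lemma dif_diff: "(dif ^^ i) (\<lambda>n. u n - v n) = (\<lambda>n. (dif ^^ i) u n - (dif ^^ i) v n)"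
  by (induction i) (auto simp: dif_def)

lemma dif_cmult: "(dif ^^ i) (\<lambda>n. c * u n) = (\<lambda>n. c * (dif ^^ i) u n)"
  by (induction i) (auto simp: dif_def algebra_simps)

lemma dif_shift: "(dif ^^ i) (\<lambda>n. u (Suc n)) = (\<lambda>n. (dif ^^ i) u (Suc n))"
  by (induction i) (auto simp: dif_def)

lemma dif_const: "(dif ^^ Suc i) (\<lambda>n. c) = (\<lambda>n. 0)"
proof (induction i)
  case 0 then show ?case by (simp add: dif_def)
next
  case (Suc i) then show ?case by (simp add: dif_def)
qed

lemma dif_cong_aux: "\<forall>n\<ge>N. u n = v n \<Longrightarrow> \<forall>n\<ge>N. (dif ^^ i) u n = (dif ^^ i) v n"
  by (induction i) (auto simp: dif_def)

lemma dif_cong_ev: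
  assumes "eventually (\<lambda>n. u n = v n) sequentially"
  shows "eventually (\<lambda>n. (dif ^^ i) u n = (dif ^^ i) v n) sequentially"
proof -
  from assms obtain N where "\<forall>n\<ge>N. u n = v n" by (auto simp: eventually_sequentially)
  then have "\<forall>n\<ge>N. (dif ^^ i) u n = (dif ^^ i) v n" by (rule dif_cong_aux)
  then show ?thesis by (auto simp: eventually_sequentially)
qed

lemma bnd_cong_ev:
  assumes "bnd u s" "eventually (\<lambda>n. u n = v n) sequentially" shows "bnd v s"
proof -
  from assms(1) obtain K where K: "K \<ge> 0" "eventually (\<lambda>n. \<bar>u n\<bar> \<le> K * real n powr (-s)) sequentially"
    by (auto simp: bnd_def)
  have "eventually (\<lambda>n. \<bar>v n\<bar> \<le> K * real n powr (-s)) sequentially"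
    using K(2) assms(2) by eventually_elim auto
  with K(1) show ?thesis by (auto simp: bnd_def)
qed

lemma bnd_add:
  assumes "bnd u s" "bnd v s" shows "bnd (\<lambda>n. u n + v n) s"
proof -
  from assms obtain K1 K2 where K: "K1 \<ge> 0" "eventually (\<lambda>n. \<bar>u n\<bar> \<le> K1 * real n powr (-s)) sequentially"
    "K2 \<ge> 0" "eventually (\<lambda>n. \<bar>v n\<bar> \<le> K2 * real n powr (-s)) sequentially"
    by (auto simp: bnd_def)
  have "eventually (\<lambda>n. \<bar>u n + v n\<bar> \<le> (K1 + K2) * real n powr (-s)) sequentially"
    using K(2,4) by eventually_elim (auto simp: algebra_simps)
  with K show ?thesis unfolding bnd_def by (intro exI[of _ "K1+K2"]) auto
qed

lemma bnd_cmult: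
  assumes "bnd u s" shows "bnd (\<lambda>n. c * u n) s"
proof -
  from assms obtain K where K: "K \<ge> 0" "eventually (\<lambda>n. \<bar>u n\<bar> \<le> K * real n powr (-s)) sequentially"
    by (auto simp: bnd_def)
  have "eventually (\<lambda>n. \<bar>c * u n\<bar> \<le> (\<bar>c\<bar> * K) * real n powr (-s)) sequentially"
    using K(2) by eventually_elim (auto simp: abs_mult mult.assoc intro: mult_left_mono)
  with K show ?thesis unfolding bnd_def by (intro exI[of _ "\<bar>c\<bar>*K"]) auto
qed

lemma bnd_uminus: "bnd u s \<Longrightarrow> bnd (\<lambda>n. - u n) s"
  using bnd_cmult[of u s "-1"] by simp

lemma bnd_diff: "bnd u s \<Longrightarrow> bnd v s \<Longrightarrow> bnd (\<lambda>n. u n - v n) s"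
  using bnd_add[of u s "\<lambda>n. - v n"] bnd_uminus[of v s] by simp

lemma bnd_mono:
  assumes "bnd u s" "t \<le> s" shows "bnd u t"
proof -
  from assms obtain K where K: "K \<ge> 0" "eventually (\<lambda>n. \<bar>u n\<bar> \<le> K * real n powr (-s)) sequentially"
    by (auto simp: bnd_def)
  have "eventually (\<lambda>n. \<bar>u n\<bar> \<le> K * real n powr (-t)) sequentially"
    using K(2) eventually_ge_at_top[of 1]
  proof eventually_elim
    case (elim n)
    have "real n powr (-s) \<le> real n powr (-t)" using elim assms(2) by (intro powr_mono) auto
    then show ?case using elim K(1) by (meson mult_left_mono order_trans)
  qed
  with K show ?thesis by (auto simp: bnd_def)
qed

lemma bnd_mult:
  assumes "bnd u s" "bnd v t" shows "bnd (\<lambda>n. u n * v n) (s + t)"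
proof -
  from assms obtain K1 K2 where K: "K1 \<ge> 0" "eventually (\<lambda>n. \<bar>u n\<bar> \<le> K1 * real n powr (-s)) sequentially"
    "K2 \<ge> 0" "eventually (\<lambda>n. \<bar>v n\<bar> \<le> K2 * real n powr (-t)) sequentially"
    by (auto simp: bnd_def)
  have "eventually (\<lambda>n. \<bar>u n * v n\<bar> \<le> (K1 * K2) * real n powr (-(s+t))) sequentially"
    using K(2,4) eventually_ge_at_top[of 1]
  proof eventually_elim
    case (elim n)
    have "\<bar>u n * v n\<bar> \<le> (K1 * real n powr (-s)) * (K2 * real n powr (-t))"
      unfolding abs_mult using elim by (intro mult_mono) auto
    also have "\<dots> = (K1 * K2) * real n powr (-(s+t))" using elim
      by (simp add: powr_add[symmetric] algebra_simps)
    finally show ?case .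
  qed
  with K show ?thesis unfolding bnd_def by (intro exI[of _ "K1*K2"]) auto
qed

lemma powr_shift_le:
  assumes "n \<ge> 1" shows "real (Suc n) powr e \<le> 2 powr \<bar>e\<bar> * real n powr e"
proof -
  have q: "real (Suc n) = real n * (real (Suc n) / real n)" using assms by auto
  have q1: "1 \<le> real (Suc n) / real n" "real (Suc n) / real n \<le> 2" using assms by (auto simp: field_simps)
  have "(real (Suc n) / real n) powr e \<le> 2 powr \<bar>e\<bar>"
  proof (cases "e \<ge> 0")
    case True
    then have "(real (Suc n) / real n) powr e \<le> 2 powr e" using q1 by (intro powr_mono2) auto
    then show ?thesis using True by simp
  next
    case False
    then have "(real (Suc n) / real n) powr e \<le> (real (Suc n) / real n) powr 0" using q1
      by (intro powr_mono) auto
    then have "(real (Suc n) / real n) powr e \<le> 1" using q1 assms by simp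
    also have "1 \<le> 2 powr \<bar>e\<bar>" by (intro ge_one_powr_ge_zero) auto
    finally show ?thesis .
  qed
  then have "real n powr e * (real (Suc n) / real n) powr e \<le> real n powr e * 2 powr \<bar>e\<bar>"
    by (intro mult_left_mono) auto
  moreover have "real (Suc n) powr e = real n powr e * (real (Suc n) / real n) powr e"
    using powr_mult[of "real n" "real (Suc n) / real n" e] q by simp
  ultimately show ?thesis by (simp add: mult.commute)
qed

lemma bnd_shift:
  assumes "bnd u s" shows "bnd (\<lambda>n. u (Suc n)) s"
proof -
  from assms obtain K where K: "K \<ge> 0" "eventually (\<lambda>n. \<bar>u n\<bar> \<le> K * real n powr (-s)) sequentially"
    by (auto simp: bnd_def)
  have "eventually (\<lambda>n. \<bar>u (Suc n)\<bar> \<le> K * real (Suc n) powr (-s)) sequentially"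
    using K(2) by (rule eventually_sequentially_Suc[THEN iffD2])
  then have "eventually (\<lambda>n. \<bar>u (Suc n)\<bar> \<le> (K * 2 powr \<bar>s\<bar>) * real n powr (-s)) sequentially"
    using eventually_ge_at_top[of 1]
  proof eventually_elim
    case (elim n)
    have "K * real (Suc n) powr (-s) \<le> K * (2 powr \<bar>-s\<bar> * real n powr (-s))"
      using powr_shift_le[of n "-s"] elim K(1) by (intro mult_left_mono) auto
    then show ?case using elim by (simp add: mult.assoc)
  qed
  with K show ?thesis unfolding bnd_def by (intro exI[of _ "K * 2 powr \<bar>s\<bar>"]) auto
qed

lemma bnd_const: "bnd (\<lambda>n. c) 0"
  unfolding bnd_def eventually_sequentially
  by (intro exI[of _ "\<bar>c\<bar>"] conjI exI[of _ 1]) auto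

lemma bnd_zero: "bnd (\<lambda>n. 0) s"
  unfolding bnd_def by auto

lemma bnd_powr: "bnd (\<lambda>n. real n powr a) (-a)"
  unfolding bnd_def by (intro exI[of _ 1]) auto

lemma lim0_cmp:
  assumes "h \<longlonglongrightarrow> 0" "eventually (\<lambda>n. \<bar>g n\<bar> \<le> h n) sequentially"
  shows "g \<longlonglongrightarrow> (0::real)"
  using assms(2) by (intro tendsto_0_le[OF assms(1), of _ 1]) (auto elim!: eventually_mono)

lemma bnd_tendsto0:
  assumes "bnd u s" "s > 0" shows "u \<longlonglongrightarrow> 0"
proof -
  from assms obtain K where K: "K \<ge> 0" "eventually (\<lambda>n. \<bar>u n\<bar> \<le> K * real n powr (-s)) sequentially"
    by (auto simp: bnd_def)
  have "(\<lambda>n. K * real n powr (-s)) \<longlonglongrightarrow> K * 0"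
    by (intro tendsto_mult tendsto_const tendsto_neg_powr filterlim_real_sequentially) (use assms in auto)
  then show ?thesis
    by (intro lim0_cmp[OF _ K(2)]) auto
qed

lemma bnd_bounded:
  assumes "bnd u s" "s \<ge> 0" shows "\<exists>K. eventually (\<lambda>n. \<bar>u n\<bar> \<le> K) sequentially"
proof -
  from assms obtain K where K: "K \<ge> 0" "eventually (\<lambda>n. \<bar>u n\<bar> \<le> K * real n powr (-s)) sequentially"
    by (auto simp: bnd_def)
  have "eventually (\<lambda>n. \<bar>u n\<bar> \<le> K) sequentially"
    using K(2) eventually_ge_at_top[of 1]
  proof eventually_elim
    case (elim n)
    have "real n powr (-s) \<le> real n powr 0" using elim assms by (intro powr_mono) auto
    then have "real n powr (-s) \<le> 1" using elim by simp
    then show ?case using elim K(1) by (meson mult_left_le order_trans)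
  qed
  then show ?thesis by blast
qed



lemma SJ_bnd: "SJ J u s \<Longrightarrow> bnd u s"
  unfolding SJ_def by (metis funpow_0 le0 add_0_right of_nat_0)

lemma Sc_SJ: "Sc u s \<Longrightarrow> SJ J u s" by (simp add: Sc_def)

lemma Sc_bnd: "Sc u s \<Longrightarrow> bnd u s" using Sc_SJ SJ_bnd by blast

lemma SJ_down: "SJ (Suc J) u s \<Longrightarrow> SJ J u s" by (auto simp: SJ_def)

lemma SJ_dif: "SJ (Suc J) u s \<Longrightarrow> SJ J (dif u) (s + 1)"
  unfolding SJ_def
proof safe
  fix i assume A: "\<forall>i\<le>Suc J. bnd ((dif ^^ i) u) (s + real i)" and i: "i \<le> J"
  then have "bnd ((dif ^^ Suc i) u) (s + real (Suc i))" by auto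
  then show "bnd ((dif ^^ i) (dif u)) (s + 1 + real i)" by (simp add: dif_comm add_ac)
qed

lemma Sc_dif: "Sc u s \<Longrightarrow> Sc (dif u) (s + 1)"
  unfolding Sc_def using SJ_dif by blast

lemma SJ_add: "SJ J u s \<Longrightarrow> SJ J v s \<Longrightarrow> SJ J (\<lambda>n. u n + v n) s"
  unfolding SJ_def dif_add by (auto intro: bnd_add)

lemma SJ_diff: "SJ J u s \<Longrightarrow> SJ J v s \<Longrightarrow> SJ J (\<lambda>n. u n - v n) s"
  unfolding SJ_def dif_diff by (auto intro: bnd_diff)

lemma SJ_cmult: "SJ J u s \<Longrightarrow> SJ J (\<lambda>n. c * u n) s"
  unfolding SJ_def dif_cmult by (auto intro: bnd_cmult)

lemma SJ_mono: "SJ J u s \<Longrightarrow> t \<le> s \<Longrightarrow> SJ J u t"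
  unfolding SJ_def by (auto intro: bnd_mono)

lemma SJ_shift: "SJ J u s \<Longrightarrow> SJ J (\<lambda>n. u (Suc n)) s"
  unfolding SJ_def dif_shift by (auto intro: bnd_shift)

lemma SJ_cong_ev: "SJ J u s \<Longrightarrow> eventually (\<lambda>n. u n = v n) sequentially \<Longrightarrow> SJ J v s"
  unfolding SJ_def by (auto intro: bnd_cong_ev dif_cong_ev)

lemma SJ_const: "SJ J (\<lambda>n. c) 0"
  unfolding SJ_def
proof safe
  fix i show "bnd ((dif ^^ i) (\<lambda>n. c)) (0 + real i)"
  proof (cases i)
    case 0 then show ?thesis using bnd_const by simp
  next
    case (Suc k) then show ?thesis by (simp only: dif_const bnd_zero)
  qed
qed

lemma SJ_mult: "SJ J u s \<Longrightarrow> SJ J v t \<Longrightarrow> SJ J (\<lambda>n. u n * v n) (s + t)"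
proof (induction J arbitrary: u v s t)
  case 0
  then show ?case using bnd_mult[OF SJ_bnd[OF 0(1)] SJ_bnd[OF 0(2)]] by (auto simp: SJ_def)
next
  case (Suc J)
  have d: "dif (\<lambda>n. u n * v n) = (\<lambda>n. dif u n * v n + u (Suc n) * dif v n)"
    by (auto simp: dif_def algebra_simps)
  have 1: "SJ J (\<lambda>n. dif u n * v n) (s + t + 1)"
    using Suc.IH[OF SJ_dif[OF Suc.prems(1)] SJ_down[OF Suc.prems(2)]] by (simp add: add_ac)
  have 2: "SJ J (\<lambda>n. u (Suc n) * dif v n) (s + t + 1)"
    using Suc.IH[OF SJ_shift[OF SJ_down[OF Suc.prems(1)]] SJ_dif[OF Suc.prems(2)]] by (simp add: add_ac)
  have 3: "SJ J (dif (\<lambda>n. u n * v n)) (s + t + 1)"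
    unfolding d using SJ_add[OF 1 2] .
  show ?case unfolding SJ_def
  proof safe
    fix i assume "i \<le> Suc J"
    show "bnd ((dif ^^ i) (\<lambda>n. u n * v n)) (s + t + real i)"
    proof (cases i)
      case 0 then show ?thesis using bnd_mult[OF SJ_bnd[OF Suc.prems(1)] SJ_bnd[OF Suc.prems(2)]] by simp
    next
      case (Suc k)
      with \<open>i \<le> Suc J\<close> have "k \<le> J" by simp
      with 3 have "bnd ((dif ^^ k) (dif (\<lambda>n. u n * v n))) (s + t + 1 + real k)" by (auto simp: SJ_def)
      then show ?thesis using Suc by (simp add: dif_comm add_ac)
    qed
  qed
qed

lemma SJ_recip:
  assumes "SJ J u 0" "d > 0" "eventually (\<lambda>n. u n \<ge> d) sequentially"
  shows "SJ J (\<lambda>n. 1 / u n) 0"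
  using assms(1)
proof (induction J)
  case 0
  have "eventually (\<lambda>n. \<bar>1 / u n\<bar> \<le> (1/d) * real n powr (-0)) sequentially"
    using assms(3) eventually_ge_at_top[of 1]
  proof eventually_elim
    case (elim n)
    then have "u n > 0" using assms(2) by linarith
    then have "\<bar>1 / u n\<bar> = 1 / u n" by simp
    also have "\<dots> \<le> 1 / d" using elim assms(2) by (intro divide_left_mono) auto
    finally show ?case using elim by simp
  qed
  then have "bnd (\<lambda>n. 1 / u n) 0" unfolding bnd_def using assms(2)
    by (intro exI[of _ "1/d"] conjI) auto
  then show ?case unfolding SJ_def by simp
next
  case (Suc J)
  define w where "w = (\<lambda>n. 1 / u n)"
  have w: "SJ J w 0" using Suc.IH[OF SJ_down[OF Suc.prems]] by (simp add: w_def)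
  have ev: "eventually (\<lambda>n. dif w n = - (dif u n * (w n * w (Suc n)))) sequentially"
    using assms(3) eventually_sequentially_Suc[THEN iffD2, OF assms(3)]
  proof eventually_elim
    case (elim n)
    then have "u n > 0" "u (Suc n) > 0" using assms(2) by linarith+
    then show ?case by (simp add: dif_def w_def field_simps)
  qed
  have "SJ J (\<lambda>n. - (dif u n * (w n * w (Suc n)))) 1"
    using SJ_cmult[OF SJ_mult[OF SJ_dif[OF Suc.prems] SJ_mult[OF w SJ_shift[OF w]]], of "-1"] by simp
  then have dw: "SJ J (dif w) 1" by (rule SJ_cong_ev) (use ev in \<open>auto elim: eventually_mono\<close>)
  show ?case unfolding SJ_def
  proof safe
    fix i assume "i \<le> Suc J"
    show "bnd ((dif ^^ i) (\<lambda>n. 1 / u n)) (0 + real i)"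
    proof (cases i)
      case 0 then show ?thesis using SJ_bnd[OF w] by (simp add: w_def)
    next
      case (Suc k)
      with \<open>i \<le> Suc J\<close> have "k \<le> J" by simp
      with dw have "bnd ((dif ^^ k) (dif w)) (1 + real k)" by (auto simp: SJ_def)
      then show ?thesis using Suc by (simp add: dif_comm add_ac w_def)
    qed
  qed
qed



lemma Sc_add: "Sc u s \<Longrightarrow> Sc v s \<Longrightarrow> Sc (\<lambda>n. u n + v n) s"
  by (auto simp: Sc_def intro: SJ_add)
lemma Sc_diff: "Sc u s \<Longrightarrow> Sc v s \<Longrightarrow> Sc (\<lambda>n. u n - v n) s"
  by (auto simp: Sc_def intro: SJ_diff)
lemma Sc_cmult: "Sc u s \<Longrightarrow> Sc (\<lambda>n. c * u n) s"
  by (auto simp: Sc_def intro: SJ_cmult)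
lemma Sc_mono: "Sc u s \<Longrightarrow> t \<le> s \<Longrightarrow> Sc u t"
  by (auto simp: Sc_def intro: SJ_mono)
lemma Sc_shift: "Sc u s \<Longrightarrow> Sc (\<lambda>n. u (Suc n)) s"
  by (auto simp: Sc_def intro: SJ_shift)
lemma Sc_cong_ev: "Sc u s \<Longrightarrow> eventually (\<lambda>n. u n = v n) sequentially \<Longrightarrow> Sc v s"
  by (auto simp: Sc_def intro: SJ_cong_ev)
lemma Sc_const: "Sc (\<lambda>n. c) 0"
  by (auto simp: Sc_def intro: SJ_const)
lemma Sc_zero: "Sc (\<lambda>n. 0) s"
  unfolding Sc_def SJ_def
proof safe
  fix J i show "bnd ((dif ^^ i) (\<lambda>n. 0)) (s + real i)"
    using bnd_zero dif_cmult[of i 0 "\<lambda>n. 0"] by simp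
qed
lemma Sc_mult: "Sc u s \<Longrightarrow> Sc v t \<Longrightarrow> Sc (\<lambda>n. u n * v n) (s + t)"
  by (auto simp: Sc_def intro: SJ_mult)
lemma Sc_recip: "Sc u 0 \<Longrightarrow> d > 0 \<Longrightarrow> eventually (\<lambda>n. u n \<ge> d) sequentially \<Longrightarrow> Sc (\<lambda>n. 1 / u n) 0"
  by (auto simp: Sc_def intro: SJ_recip)
lemma Sc_uminus: "Sc u s \<Longrightarrow> Sc (\<lambda>n. - u n) s"
  using Sc_cmult[of u s "-1"] by simp
lemma Sc_tendsto0: "Sc u s \<Longrightarrow> s > 0 \<Longrightarrow> u \<longlonglongrightarrow> 0"
  using bnd_tendsto0 Sc_bnd by blast
lemma Sc_bounded: "Sc u s \<Longrightarrow> s \<ge> 0 \<Longrightarrow> \<exists>K. eventually (\<lambda>n. \<bar>u n\<bar> \<le> K) sequentially"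
  using bnd_bounded Sc_bnd by blast
lemma Sc_sum: "finite A \<Longrightarrow> (\<And>i. i \<in> A \<Longrightarrow> Sc (f i) s) \<Longrightarrow> Sc (\<lambda>n. \<Sum>i\<in>A. f i n) s"
proof (induction A rule: finite_induct)
  case empty then show ?case using Sc_zero by simp
next
  case (insert x F) then show ?case using Sc_add[of "f x" s "\<lambda>n. \<Sum>i\<in>F. f i n"] by simp
qed

lemma dif_deriv_bound:
  fixes F :: "nat \<Rightarrow> real \<Rightarrow> real"
  assumes der: "\<And>i t. t > 0 \<Longrightarrow> (F i has_real_derivative F (Suc i) t) (at t)"
    and n: "n \<ge> 1"
    and B: "\<And>t. real n \<le> t \<Longrightarrow> t \<le> real n + real j \<Longrightarrow> \<bar>F j t\<bar> \<le> M"
  shows "\<bar>(dif ^^ j) (\<lambda>k. F 0 (real k)) n\<bar> \<le> M"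
  using der B
proof (induction j arbitrary: F)
  case 0 then show ?case by simp
next
  case (Suc j)
  define G where "G = (\<lambda>i t. F i (t + 1) - F i t)"
  have derG: "(G i has_real_derivative G (Suc i) t) (at t)" if "t > 0" for i t
  proof -
    have "(F i has_real_derivative F (Suc i) (t + 1)) (at (t + 1))" using Suc.prems(1) that by simp
    then have "((\<lambda>t. F i (t + 1)) has_real_derivative F (Suc i) (t + 1)) (at t)"
      by (simp add: DERIV_shift)
    then show ?thesis unfolding G_def using Suc.prems(1)[OF that] by (intro DERIV_diff) auto
  qed
  have BG: "\<bar>G j t\<bar> \<le> M" if "real n \<le> t" "t \<le> real n + real j" for t
  proof -
    have tpos: "t > 0" using that n by linarith
    obtain z where z: "t < z" "z < t + 1" "F j (t + 1) - F j t = (t + 1 - t) * F (Suc j) z"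
      using MVT2[of t "t+1" "F j" "F (Suc j)"] Suc.prems(1) tpos by force
    have "\<bar>F (Suc j) z\<bar> \<le> M" using z that by (intro Suc.prems(2)) auto
    then show ?thesis using z by (simp add: G_def)
  qed
  have eq: "(dif ^^ Suc j) (\<lambda>k. F 0 (real k)) = (dif ^^ j) (\<lambda>k. G 0 (real k))"
    unfolding dif_Suc by (simp add: dif_def G_def add_ac)
  show ?case unfolding eq by (rule Suc.IH) (use derG BG in auto)
qed

lemma powr_interval_le:
  fixes t K e :: real
  assumes "n \<ge> 1" "real n \<le> t" "t \<le> real n + K" "K \<ge> 0"
  shows "t powr e \<le> (1 + K) powr \<bar>e\<bar> * real n powr e"
proof -
  have "K \<le> K * real n" using mult_left_mono[of 1 "real n" K] assms by auto
  then have q1: "1 \<le> t / real n" "t / real n \<le> 1 + K" using assms by (auto simp: field_simps)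
  have "(t / real n) powr e \<le> (1 + K) powr \<bar>e\<bar>"
  proof (cases "e \<ge> 0")
    case True
    then have "(t / real n) powr e \<le> (1 + K) powr e" using q1 by (intro powr_mono2) auto
    then show ?thesis using True by simp
  next
    case False
    then have "(t / real n) powr e \<le> (t / real n) powr 0" using q1
      by (intro powr_mono) auto
    then have "(t / real n) powr e \<le> 1" using q1 assms by simp
    also have "1 \<le> (1 + K) powr \<bar>e\<bar>" using assms by (intro ge_one_powr_ge_zero) auto
    finally show ?thesis .
  qed
  then have "real n powr e * (t / real n) powr e \<le> real n powr e * (1 + K) powr \<bar>e\<bar>"
    by (intro mult_left_mono) auto
  moreover have "t powr e = real n powr e * (t / real n) powr e"
    using powr_mult[of "real n" "t / real n" e] assms by simp
  ultimately show ?thesis by (simp add: mult.commute)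
qed

lemma Sc_family:
  fixes F :: "nat \<Rightarrow> real \<Rightarrow> real"
  assumes der: "\<And>i t. t > 0 \<Longrightarrow> (F i has_real_derivative F (Suc i) t) (at t)"
    and B: "\<And>j. \<exists>B. \<forall>t\<ge>1. \<bar>F j t\<bar> \<le> B * t powr (-s - real j)"
  shows "Sc (\<lambda>n. F 0 (real n)) s"
  unfolding Sc_def SJ_def
proof safe
  fix J i
  obtain B0 where B0: "\<forall>t\<ge>1. \<bar>F i t\<bar> \<le> B0 * t powr (-s - real i)" using B by blast
  define Bi where "Bi = \<bar>B0\<bar>"
  have Bi: "\<forall>t\<ge>1. \<bar>F i t\<bar> \<le> Bi * t powr (-s - real i)" "Bi \<ge> 0" unfolding Bi_def
    using B0 by (auto intro: order_trans[OF _ mult_right_mono[OF abs_ge_self]])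
  define C where "C = Bi * (1 + real i) powr \<bar>-s - real i\<bar>"
  have "eventually (\<lambda>n. \<bar>(dif ^^ i) (\<lambda>n. F 0 (real n)) n\<bar> \<le> C * real n powr (- (s + real i))) sequentially"
    using eventually_ge_at_top[of 1]
  proof eventually_elim
    case (elim n)
    show ?case
    proof (rule dif_deriv_bound[where F=F, OF der elim])
      fix t assume t: "real n \<le> t" "t \<le> real n + real i"
      have "\<bar>F i t\<bar> \<le> Bi * t powr (-s - real i)" using Bi t elim by auto
      also have "\<dots> \<le> Bi * ((1 + real i) powr \<bar>-s - real i\<bar> * real n powr (-s - real i))"
        using powr_interval_le[OF elim t] Bi(2) by (intro mult_left_mono) auto
      finally show "\<bar>F i t\<bar> \<le> C * real n powr (- (s + real i))" by (simp add: C_def algebra_simps)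
    qed
  qed
  moreover have "C \<ge> 0" using Bi(2) by (simp add: C_def)
  ultimately show "bnd ((dif ^^ i) (\<lambda>n. F 0 (real n))) (s + real i)" unfolding bnd_def by blast
qed

lemma Taylor_family:
  fixes F :: "nat \<Rightarrow> real \<Rightarrow> real"
  assumes der: "\<And>i t. t > 0 \<Longrightarrow> (F i has_real_derivative F (Suc i) t) (at t)"
    and B: "\<And>j. \<exists>B. \<forall>t\<ge>1. \<bar>F j t\<bar> \<le> B * t powr (-s - real j)"
  shows "Sc (\<lambda>n. dif (\<lambda>k. F 0 (real k)) n - F 1 (real n)) (s + 2)"
proof -
  define G where "G = (\<lambda>i t. F i (t + 1) - F i t - F (Suc i) t)"
  have derG: "(G i has_real_derivative G (Suc i) t) (at t)" if "t > 0" for i t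
  proof -
    have "(F i has_real_derivative F (Suc i) (t + 1)) (at (t + 1))" using der that by simp
    then have "((\<lambda>t. F i (t + 1)) has_real_derivative F (Suc i) (t + 1)) (at t)"
      by (simp add: DERIV_shift)
    then show ?thesis unfolding G_def using der[OF that] der[OF that, of "Suc i"]
      by (intro DERIV_diff) auto
  qed
  have BG: "\<exists>B. \<forall>t\<ge>1. \<bar>G j t\<bar> \<le> B * t powr (-(s+2) - real j)" for j
  proof -
    obtain B0 where B0: "\<forall>t\<ge>1. \<bar>F (Suc (Suc j)) t\<bar> \<le> B0 * t powr (-s - real (Suc (Suc j)))"
      using B by blast
    define Bi where "Bi = \<bar>B0\<bar>"
    have Bi: "\<forall>t\<ge>1. \<bar>F (Suc (Suc j)) t\<bar> \<le> Bi * t powr (-s - real (Suc (Suc j)))" "Bi \<ge> 0"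
      unfolding Bi_def using B0 by (auto intro: order_trans[OF _ mult_right_mono[OF abs_ge_self]])
    define e where "e = -s - real (Suc (Suc j))"
    have "\<forall>t\<ge>1. \<bar>G j t\<bar> \<le> (Bi * 2 powr \<bar>e\<bar>) * t powr (-(s+2) - real j)"
    proof safe
      fix t :: real assume t: "t \<ge> 1"
      obtain z where z: "t < z" "z < t + 1" "F j (t + 1) - F j t = (t + 1 - t) * F (Suc j) z"
        using MVT2[of t "t+1" "F j" "F (Suc j)"] der t by force
      obtain y where y: "t < y" "y < z" "F (Suc j) z - F (Suc j) t = (z - t) * F (Suc (Suc j)) y"
        using MVT2[of t z "F (Suc j)" "F (Suc (Suc j))"] der t z(1) by force
      have "G j t = (z - t) * F (Suc (Suc j)) y" using z y by (simp add: G_def)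
      then have "\<bar>G j t\<bar> = (z - t) * \<bar>F (Suc (Suc j)) y\<bar>" using z by (simp add: abs_mult)
      also have "\<dots> \<le> 1 * \<bar>F (Suc (Suc j)) y\<bar>" using z by (intro mult_right_mono) auto
      also have "\<dots> \<le> Bi * y powr e" using Bi y t unfolding e_def by simp
      also have "y powr e \<le> 2 powr \<bar>e\<bar> * t powr e"
      proof -
        have "y powr e \<le> (1 + 1) powr \<bar>e\<bar> * real (nat 1) powr e" if False using that by simp
        have tt: "t \<le> y" "y \<le> t + 1" using y z by auto
        have "(y / t) powr e \<le> 2 powr \<bar>e\<bar>"
        proof (cases "e \<ge> 0")
          case True
          then have "(y / t) powr e \<le> 2 powr e" using tt t by (intro powr_mono2) (auto simp: field_simps)
          then show ?thesis using True by simp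
        next
          case False
          then have "(y / t) powr e \<le> (y / t) powr 0" using tt t
            by (intro powr_mono) (auto simp: field_simps)
          then have "(y / t) powr e \<le> 1" using tt t by simp
          also have "1 \<le> 2 powr \<bar>e\<bar>" by (intro ge_one_powr_ge_zero) auto
          finally show ?thesis .
        qed
        then have "t powr e * (y / t) powr e \<le> t powr e * 2 powr \<bar>e\<bar>"
          by (intro mult_left_mono) auto
        moreover have "y powr e = t powr e * (y / t) powr e"
          using powr_mult[of t "y / t" e] t by simp
        ultimately show ?thesis by (simp add: mult.commute)
      qed
      then have "Bi * y powr e \<le> Bi * (2 powr \<bar>e\<bar> * t powr e)" using Bi(2) by (intro mult_left_mono) auto
      finally show "\<bar>G j t\<bar> \<le> (Bi * 2 powr \<bar>e\<bar>) * t powr (-(s+2) - real j)"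
        by (simp add: e_def algebra_simps)
    qed
    then show ?thesis by blast
  qed
  have "Sc (\<lambda>n. G 0 (real n)) (s + 2)" by (rule Sc_family[OF derG BG]) auto
  then show ?thesis by (simp add: G_def dif_def add_ac)
qed



definition pfam :: "real \<Rightarrow> nat \<Rightarrow> real \<Rightarrow> real" where
  "pfam s j t = (\<Prod>i<j. (-s - real i)) * t powr (-s - real j)"

lemma pfam_der: "t > 0 \<Longrightarrow> (pfam s j has_real_derivative pfam s (Suc j) t) (at t)"
proof -
  assume t: "t > 0"
  have "((\<lambda>t. (\<Prod>i<j. (-s - real i)) * t powr (-s - real j)) has_real_derivative
          (\<Prod>i<j. (-s - real i)) * ((-s - real j) * t powr (-s - real j - 1))) (at t)"
    by (intro DERIV_cmult has_real_derivative_powr t)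
  then show ?thesis unfolding pfam_def by (simp add: algebra_simps)
qed

lemma pfam_bound: "\<exists>B. \<forall>t\<ge>1. \<bar>pfam s' j t\<bar> \<le> B * t powr (-s' - real j)"
  by (intro exI[of _ "\<bar>\<Prod>i<j. (-s' - real i)\<bar>"]) (auto simp: pfam_def abs_mult)

lemma pfam_shift_bound: "\<exists>B. \<forall>t\<ge>1. \<bar>pfam s (Suc j) t\<bar> \<le> B * t powr (-(s+1) - real j)"
proof -
  have e: "-(s+1) - real j = -s - real (Suc j)" by simp
  show ?thesis unfolding e by (rule pfam_bound)
qed

lemma Sc_powr: "Sc (\<lambda>n. real n powr (-s)) s"
  using Sc_family[of "pfam s" s, OF pfam_der pfam_bound] by (simp add: pfam_def)

lemma Sc_powr': "Sc (\<lambda>n. real n powr a) (-a)"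
  using Sc_powr[of "-a"] by simp

lemma Sc_powr_dif1:
  "Sc (\<lambda>n. dif (\<lambda>k. real k powr (-s)) n + s * real n powr (-s-1)) (s + 2)"
  using Taylor_family[of "pfam s" s, OF pfam_der pfam_bound] by (simp add: pfam_def)

lemma Sc_powr_dif2:
  "Sc (\<lambda>n. dif (dif (\<lambda>k. real k powr (-s))) n - s * (s + 1) * real n powr (-s-2)) (s + 3)"
proof -
  define f where "f = (\<lambda>k. real k powr (-s))"
  define G1 where "G1 = (\<lambda>n. dif f n + s * real n powr (-s-1))"
  have G1: "Sc G1 (s+2)" using Sc_powr_dif1 by (simp add: G1_def f_def)
  have T: "Sc (\<lambda>n. dif (\<lambda>k. pfam s (Suc 0) (real k)) n - pfam s (Suc 1) (real n)) (s + 1 + 2)"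
    using Taylor_family[of "\<lambda>j. pfam s (Suc j)" "s+1", OF pfam_der pfam_shift_bound] by simp
  have e1: "dif f = (\<lambda>n. G1 n + (-s) * real n powr (-s-1))" by (simp add: G1_def)
  have e2: "(\<lambda>k. pfam s (Suc 0) (real k)) = (\<lambda>n. (-s) * real n powr (-s-1))"
    by (simp add: pfam_def)
  have e3: "\<And>n. pfam s (Suc 1) (real n) = s * (s+1) * real n powr (-s-2)"
    by (simp add: pfam_def algebra_simps numeral_2_eq_2)
  have "dif (dif f) = (\<lambda>n. dif G1 n + dif (\<lambda>n. (-s) * real n powr (-s-1)) n)"
    unfolding e1 by (simp add: dif_def algebra_simps)
  then have "(\<lambda>n. dif (dif f) n - s * (s + 1) * real n powr (-s-2)) =
      (\<lambda>n. dif G1 n + (dif (\<lambda>k. pfam s (Suc 0) (real k)) n - pfam s (Suc 1) (real n)))"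
    unfolding e2 e3 by auto
  moreover have "Sc \<dots> (s + 3)"
    using Sc_add[OF Sc_mono[OF Sc_dif[OF G1], of "s+3"] Sc_mono[OF T, of "s+3"]] by simp
  ultimately show ?thesis by (simp add: f_def)
qed

definition Rq :: "(nat \<Rightarrow> real) \<Rightarrow> nat \<Rightarrow> real" where
  "Rq u n = u n * u (n + 2) / (u (n + 1))\<^sup>2"

lemma Rq_mult: "Rq (\<lambda>n. f n * w n) n = Rq f n * Rq w n"
  by (simp add: Rq_def power_mult_distrib)

lemma ev_pos: "eventually (\<lambda>n::nat. real n > 0) sequentially"
  using eventually_ge_at_top[of 1] by (auto elim: eventually_mono)



lemma powr_facts:
  fixes x g :: real assumes x: "x > 0"
  shows "x powr (-g-1) = x powr (-g) / x" "x powr (-g-2) = x powr (-g) / x^2"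
    "x powr (2*g+2) = x^2 / (x powr (-g))^2" "x powr (-(2*g)) = (x powr (-g))^2"
    "x powr (2*g) = 1 / (x powr (-g))^2"
proof -
  show "x powr (-g-1) = x powr (-g) / x" using x by (simp add: powr_diff)
  show "x powr (-g-2) = x powr (-g) / x^2" using x by (simp add: powr_diff)
  have sq: "(x powr (-g))^2 = x powr (-(2*g))"
    using x by (simp add: power2_eq_square powr_add[symmetric])
  show "x powr (-(2*g)) = (x powr (-g))^2" using sq by simp
  show "x powr (2*g+2) = x^2 / (x powr (-g))^2"
    unfolding sq using x by (simp add: powr_add powr_minus field_simps)
  show "x powr (2*g) = 1 / (x powr (-g))^2"
    unfolding sq using x by (simp add: powr_minus field_simps)
qed

lemma R_powr:
  fixes g :: real
  shows "Sc (\<lambda>n. real n ^ 2 * (Rq (\<lambda>k. real k powr (-g)) n - 1) - g) 1"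
proof -
  define f where "f = (\<lambda>k. real k powr (-g))"
  define G1 where "G1 = (\<lambda>n. dif f n + g * real n powr (-g-1))"
  define G2 where "G2 = (\<lambda>n. dif (dif f) n - g * (g + 1) * real n powr (-g-2))"
  have G1: "Sc G1 (g+2)" using Sc_powr_dif1[of g] by (simp add: G1_def f_def)
  have G2: "Sc G2 (g+3)" using Sc_powr_dif2[of g] by (simp add: G2_def f_def)
  define A where "A = (\<lambda>n. real n powr (2*g+2) * (f n * dif (dif f) n - (dif f n)^2) - g)"
  define B where "B = (\<lambda>n. real n powr (-(2*g)) * dif (\<lambda>k. real k powr (2*g)) n)"
  have SA: "Sc A 1"
  proof -
    have "Sc (\<lambda>n. real n powr (2*g+2) * ((f n * G2 n + (2*g) * (real n powr (-g-1) * G1 n)) - G1 n * G1 n))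
       (-(2*g+2) + ((g + (g+3))))"
    proof -
      have a1: "Sc (\<lambda>n. f n * G2 n) (g + (g + 3))" unfolding f_def by (intro Sc_mult Sc_powr G2)
      have a2: "Sc (\<lambda>n. (2*g) * (real n powr (- g - 1) * G1 n)) (g + (g + 3))"
      proof -
        have e: "-(g+1) = -g-1" by simp
        have "Sc (\<lambda>n. (2*g) * (real n powr (- g - 1) * G1 n)) ((g+1) + (g + 2))"
          using Sc_cmult[OF Sc_mult[OF Sc_powr[of "g+1"] G1]] unfolding e .
        then show ?thesis by (simp add: add_ac)
      qed
      have a3: "Sc (\<lambda>n. G1 n * G1 n) (g + (g + 3))"
        using Sc_mono[OF Sc_mult[OF G1 G1], of "g + (g+3)"] by simp
      show ?thesis using Sc_mult[OF Sc_powr'[of "2*g+2"] Sc_diff[OF Sc_add[OF a1 a2] a3]] by simp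
    qed
    then have "Sc (\<lambda>n. real n powr (2*g+2) * ((f n * G2 n + (2*g) * (real n powr (-g-1) * G1 n)) - G1 n * G1 n)) 1"
      by simp
    then show ?thesis
    proof (rule Sc_cong_ev)
      show "eventually (\<lambda>n. real n powr (2*g+2) * ((f n * G2 n + (2*g) * (real n powr (-g-1) * G1 n)) - G1 n * G1 n) = A n) sequentially"
        using ev_pos
      proof eventually_elim
        case (elim n)
        note pf = powr_facts[OF elim, of g]
        have p: "f n > 0" using elim by (simp add: f_def)
        have fn: "real n powr (-g) = f n" by (simp add: f_def)
        show ?case unfolding A_def G1_def G2_def pf fn
          using p elim by (simp add: field_simps power2_eq_square)
      qed
    qed
  qed
  have SB: "Sc B 1"
    unfolding B_def using Sc_mult[OF Sc_powr[of "2*g"] Sc_dif[OF Sc_powr'[of "2*g"]]] by simp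
  have "Sc (\<lambda>n. A n + g * B n + A n * B n) 1"
    using Sc_add[OF Sc_add[OF SA Sc_cmult[OF SB]] Sc_mono[OF Sc_mult[OF SA SB]]] by simp
  then show ?thesis
  proof (rule Sc_cong_ev)
    show "eventually (\<lambda>n. A n + g * B n + A n * B n = real n ^ 2 * (Rq (\<lambda>k. real k powr (-g)) n - 1) - g) sequentially"
      using ev_pos
    proof eventually_elim
      case (elim n)
      note pf = powr_facts[OF elim, of g]
      have e1: "real (Suc n) > 0" by simp
      note pf1 = powr_facts[OF e1, of g]
      have e2: "real (Suc (Suc n)) > 0" by simp
      have p: "f n > 0" "f (Suc n) > 0" "f (Suc (Suc n)) > 0" using elim by (simp_all add: f_def)
      have fn: "real n powr (-g) = f n" "real (Suc n) powr (-g) = f (Suc n)"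
        "real (Suc (Suc n)) powr (-g) = f (Suc (Suc n))" by (simp_all add: f_def)
      have "A n + g * B n + A n * B n = (A n + g) * (B n + 1) - g" by (simp add: algebra_simps)
      also have "B n + 1 = (f n)^2 / (f (Suc n))^2"
        unfolding B_def dif_def pf pf1 fn using p elim by (simp add: field_simps)
      also have "A n + g = real n ^2 / (f n)^2 * (f n * f (Suc (Suc n)) - (f (Suc n))^2)"
        unfolding A_def dif_def pf fn using p elim by (simp add: field_simps power2_eq_square)
      also have "real n ^2 / (f n)^2 * (f n * f (Suc (Suc n)) - (f (Suc n))^2) * ((f n)^2 / (f (Suc n))^2) - g
         = real n ^2 * ((f n * f (Suc (Suc n)) - (f (Suc n))^2) / (f (Suc n))^2) - g"
        using p by (simp add: field_simps)
      also have "\<dots> = real n ^ 2 * (Rq f n - 1) - g"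
        unfolding Rq_def using p by (simp add: field_simps)
      finally show ?case by (simp add: f_def)
    qed
  qed
qed



lemma ev_ge_of_tendsto0:
  fixes v :: "nat \<Rightarrow> real"
  assumes "v \<longlonglongrightarrow> 0" "C > 0"
  shows "eventually (\<lambda>n. C + v n \<ge> C / 2) sequentially"
proof -
  have "eventually (\<lambda>n. dist (v n) 0 < C / 2) sequentially"
    using assms by (intro tendstoD) auto
  then show ?thesis by eventually_elim (auto simp: dist_real_def)
qed

lemma R_w:
  assumes v: "Sc v e" and e: "e > 0" and C: "C > 0"
  shows "Sc (\<lambda>n. Rq (\<lambda>k. C + v k) n - 1) (e + 2)"
proof -
  define w where "w = (\<lambda>k. C + v k)"
  have w: "Sc w 0" unfolding w_def by (intro Sc_add Sc_const Sc_mono[OF v]) (use e in auto)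
  have v0: "v \<longlonglongrightarrow> 0" using Sc_tendsto0[OF v e] .
  have wge: "eventually (\<lambda>n. w n \<ge> C / 2) sequentially"
    unfolding w_def using ev_ge_of_tendsto0[OF v0 C] .
  have wge1: "eventually (\<lambda>n. w (Suc n) \<ge> C / 2) sequentially"
    using wge by (rule eventually_sequentially_Suc[THEN iffD2])
  have iw: "Sc (\<lambda>n. 1 / w (Suc n)) 0"
    by (rule Sc_recip[OF Sc_shift[OF w] _ wge1]) (use C in auto)
  have dw: "dif w = dif v" by (auto simp: w_def dif_def)
  have N: "Sc (\<lambda>n. w n * dif (dif v) n - dif v n * dif v n) (e + 2)"
  proof -
    have a: "Sc (\<lambda>n. w n * dif (dif v) n) (0 + (e + 1 + 1))" by (intro Sc_mult w Sc_dif v)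
    have b: "Sc (\<lambda>n. dif v n * dif v n) (e + 2)"
      using Sc_mono[OF Sc_mult[OF Sc_dif[OF v] Sc_dif[OF v]], of "e+2"] e by simp
    show ?thesis using Sc_diff[OF _ b] a by (simp add: add_ac)
  qed
  have "Sc (\<lambda>n. (w n * dif (dif v) n - dif v n * dif v n) * ((1 / w (Suc n)) * (1 / w (Suc n)))) (e + 2 + (0 + 0))"
    by (intro Sc_mult N iw)
  then have "Sc (\<lambda>n. (w n * dif (dif v) n - dif v n * dif v n) * ((1 / w (Suc n)) * (1 / w (Suc n)))) (e + 2)"
    by simp
  then show ?thesis
  proof (rule Sc_cong_ev)
    show "eventually (\<lambda>n. (w n * dif (dif v) n - dif v n * dif v n) * ((1 / w (Suc n)) * (1 / w (Suc n)))
         = Rq (\<lambda>k. C + v k) n - 1) sequentially"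
      using wge1
    proof eventually_elim
      case (elim n)
      then have p: "w (Suc n) > 0" using C by linarith
      have e1: "w n * dif (dif v) n - dif v n * dif v n = w n * w (Suc (Suc n)) - (w (Suc n))^2"
        by (simp add: w_def dif_def algebra_simps power2_eq_square)
      have e2: "Rq (\<lambda>k. C + v k) n - 1 = (w n * w (Suc (Suc n)) - (w (Suc n))^2) / (w (Suc n))^2"
        unfolding Rq_def w_def[symmetric] using p by (simp add: field_simps)
      show ?case unfolding e1 e2 by (simp add: field_simps power2_eq_square)
    qed
  qed
qed

lemma R_h:
  assumes v: "Sc v e" and e: "e > 0" and C: "C > 0"
  shows "Sc (\<lambda>n. real n ^ 2 * (Rq (\<lambda>k. real k powr (-g) * (C + v k)) n - 1) - g) (min 1 e)"
proof -
  define f where "f = (\<lambda>k. real k powr (-g))"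
  define U where "U = (\<lambda>n. real n ^ 2 * (Rq f n - 1) - g)"
  have U: "Sc U 1" unfolding U_def f_def by (rule R_powr)
  have Rf: "Sc (Rq f) 0"
  proof -
    have "Sc (\<lambda>n. 1 + real n powr (-2) * (g + U n)) 0"
      using Sc_add[OF Sc_const Sc_mono[OF Sc_mult[OF Sc_powr[of 2] Sc_add[OF Sc_const Sc_mono[OF U]]]]]
      by simp
    then show ?thesis
    proof (rule Sc_cong_ev)
      show "eventually (\<lambda>n. 1 + real n powr (-2) * (g + U n) = Rq f n) sequentially"
        using ev_pos
      proof eventually_elim
        case (elim n)
        have "real n powr (-2) = 1 / real n ^ 2" using elim by (simp add: powr_minus_divide)
        then show ?case unfolding U_def using elim by (simp add: field_simps)
      qed
    qed
  qed
  have W: "Sc (\<lambda>n. Rq (\<lambda>k. C + v k) n - 1) (e + 2)" by (rule R_w[OF v e C])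
  have "Sc (\<lambda>n. U n + real n powr 2 * (Rq f n * (Rq (\<lambda>k. C + v k) n - 1))) (min 1 e)"
  proof (rule Sc_add)
    show "Sc U (min 1 e)" using Sc_mono[OF U] by simp
    have "Sc (\<lambda>n. real n powr 2 * (Rq f n * (Rq (\<lambda>k. C + v k) n - 1))) (-2 + (0 + (e + 2)))"
      by (intro Sc_mult Sc_powr' Rf W)
    then show "Sc (\<lambda>n. real n powr 2 * (Rq f n * (Rq (\<lambda>k. C + v k) n - 1))) (min 1 e)"
      by (rule Sc_mono) auto
  qed
  then show ?thesis
  proof (rule Sc_cong_ev)
    show "eventually (\<lambda>n. U n + real n powr 2 * (Rq f n * (Rq (\<lambda>k. C + v k) n - 1)) =
        real n ^ 2 * (Rq (\<lambda>k. real k powr (-g) * (C + v k)) n - 1) - g) sequentially"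
      using ev_pos
    proof eventually_elim
      case (elim n)
      have "Rq (\<lambda>k. real k powr (-g) * (C + v k)) n = Rq f n * Rq (\<lambda>k. C + v k) n"
        unfolding f_def by (rule Rq_mult)
      then show ?case unfolding U_def using elim by (simp add: algebra_simps)
    qed
  qed
qed



lemma alg_id: "(a::real) * ((1 + P * W)^2 * (1 + z * (g + U)) - 1)
   = 2 * (a * P) * W + (a * P) * P * W^2 + (a * z) * (g + U) * (1 + P * W)^2"
  by (simp add: algebra_simps power2_eq_square)

lemma smooth_step:
  assumes g: "g > 0" and C: "C > 0" and e: "e > 0" and v: "Sc v e"
  defines "h \<equiv> \<lambda>k. real k powr (-g) * (C + v k)"
  shows "\<exists>C' v' e'. C' > 0 \<and> e' > 0 \<and> Sc v' e' \<and>
     eventually (\<lambda>n. (1 + h (Suc n))^2 * Rq h n - 1 = real n powr (-(min g 2)) * (C' + v' n)) sequentially"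
proof -
  define e1 where "e1 = min 1 e"
  have e1: "e1 > 0" "e1 \<le> 1" "e1 \<le> e" using e by (auto simp: e1_def)
  define U where "U = (\<lambda>n. real n ^ 2 * (Rq h n - 1) - g)"
  have U: "Sc U e1" unfolding U_def h_def e1_def by (rule R_h[OF v e C])
  have U0: "Sc U 0" using Sc_mono[OF U] e1 by simp
  define q where "q = (\<lambda>n. real n powr g * dif (\<lambda>k. real k powr (-g)) n)"
  have q: "Sc q 1" unfolding q_def using Sc_mult[OF Sc_powr'[of g] Sc_dif[OF Sc_powr[of g]]] by simp
  define W where "W = (\<lambda>n. real n powr g * h (Suc n))"
  define V where "V = (\<lambda>n. C * q n + v (Suc n) + q n * v (Suc n))"
  have V: "Sc V e1"
  proof -
    have a: "Sc (\<lambda>n. C * q n) e1" using Sc_cmult[OF Sc_mono[OF q]] e1 by blast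
    have b: "Sc (\<lambda>n. v (Suc n)) e1" using Sc_mono[OF Sc_shift[OF v]] e1 by blast
    have c: "Sc (\<lambda>n. q n * v (Suc n)) e1" using Sc_mono[OF Sc_mult[OF q Sc_shift[OF v]]] e1 by simp
    show ?thesis unfolding V_def by (intro Sc_add a b c)
  qed
  have V0: "Sc V 0" using Sc_mono[OF V] e1 by simp
  have W0: "Sc W 0"
    using Sc_add[OF Sc_const[of C] V0]
  proof (rule Sc_cong_ev)
    show "eventually (\<lambda>n. C + V n = W n) sequentially" using ev_pos
    proof eventually_elim
      case (elim n)
      have "real n powr g * real (Suc n) powr (-g) = 1 + q n"
        unfolding q_def dif_def using elim by (simp add: algebra_simps powr_minus)
      then show ?case unfolding W_def V_def h_def
        by (simp add: algebra_simps)
    qed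
  qed
  have WV: "eventually (\<lambda>n. W n = C + V n) sequentially"
    using ev_pos
  proof eventually_elim
    case (elim n)
    have "real n powr g * real (Suc n) powr (-g) = 1 + q n"
      unfolding q_def dif_def using elim by (simp add: algebra_simps powr_minus)
    then have "W n = (1 + q n) * (C + v (Suc n))" unfolding W_def h_def by (simp add: mult.assoc)
    then show ?case unfolding V_def by (simp add: algebra_simps)
  qed
  define Y where "Y = (\<lambda>n. (1 + real n powr (-g) * W n)^2 - 1)"
  have Y: "Sc Y g"
  proof -
    have P: "Sc (\<lambda>n. real n powr (-g) * W n) g" using Sc_mult[OF Sc_powr[of g] W0] by simp
    have "Sc (\<lambda>n. 2 * (real n powr (-g) * W n) + (real n powr (-g) * W n) * (real n powr (-g) * W n)) g"
      using Sc_add[OF Sc_cmult[OF P] Sc_mono[OF Sc_mult[OF P P]]] g by simp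
    then show ?thesis unfolding Y_def by (simp add: power2_eq_square algebra_simps)
  qed
  have Y0: "Sc Y 0" using Sc_mono[OF Y] g by simp
  have key: "eventually (\<lambda>n. a n * ((1 + h (Suc n))^2 * Rq h n - 1) =
      2 * (a n * real n powr (-g)) * W n + (a n * real n powr (-g)) * real n powr (-g) * (W n)^2 +
      (a n * real n powr (-2)) * (g + U n) * (1 + real n powr (-g) * W n)^2) sequentially" for a
    using ev_pos
  proof eventually_elim
    case (elim n)
    have hs: "h (Suc n) = real n powr (-g) * W n" unfolding W_def using elim
      by (simp add: powr_minus)
    have rq: "Rq h n = 1 + real n powr (-2) * (g + U n)" unfolding U_def using elim
      by (simp add: powr_minus field_simps)
    show ?case unfolding hs rq alg_id ..
  qed
  consider "g < 2" | "g = 2" | "g > 2" by linarith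
  then show ?thesis
  proof cases
    case 1
    define v' where "v' = (\<lambda>n. 2 * V n + real n powr (-g) * (W n)^2 + real n powr (g - 2) * (g + U n) * (1 + Y n))"
    have "Sc v' (min e1 (min g (2 - g)))"
    proof -
      have a: "Sc (\<lambda>n. 2 * V n) (min e1 (min g (2 - g)))" using Sc_cmult[OF Sc_mono[OF V]] by simp
      have b: "Sc (\<lambda>n. real n powr (-g) * (W n)^2) (min e1 (min g (2 - g)))"
        using Sc_mono[OF Sc_mult[OF Sc_powr[of g] Sc_mult[OF W0 W0]]] by (simp add: power2_eq_square)
      have c: "Sc (\<lambda>n. real n powr (g - 2) * (g + U n) * (1 + Y n)) (min e1 (min g (2 - g)))"
        using Sc_mono[OF Sc_mult[OF Sc_mult[OF Sc_powr'[of "g-2"] Sc_add[OF Sc_const U0]] Sc_add[OF Sc_const Y0]]]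
        by simp
      show ?thesis unfolding v'_def by (intro Sc_add a b c)
    qed
    moreover have "eventually (\<lambda>n. (1 + h (Suc n))^2 * Rq h n - 1 = real n powr (-(min g 2)) * (2 * C + v' n)) sequentially"
      using key[of "\<lambda>n. real n powr g"] WV ev_pos
    proof eventually_elim
      case (elim n)
      have f1: "real n powr g * real n powr (-g) = 1" using elim by (simp add: powr_minus)
      have f2: "real n powr g * real n powr (-2) = real n powr (g - 2)" using elim by (simp add: powr_add[symmetric])
      have f3: "real n powr (-g) * real n powr g = 1" using f1 by (simp add: mult.commute)
      have "real n powr (-g) * (2 * C + v' n) = real n powr (-g) * (real n powr g * ((1 + h (Suc n))^2 * Rq h n - 1))"
        unfolding elim(1) f1 f2 v'_def Y_def elim(2) by (simp add: algebra_simps)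
      also have "\<dots> = (1 + h (Suc n))^2 * Rq h n - 1" by (simp add: mult.assoc[symmetric] f3)
      finally show ?case using 1 by simp
    qed
    ultimately show ?thesis using C e1 g 1 by (intro exI[of _ "2*C"] exI[of _ v'] exI[of _ "min e1 (min g (2 - g))"]) auto
  next
    case 2
    define v' where "v' = (\<lambda>n. 2 * V n + real n powr (-g) * (W n)^2 + U n + (g + U n) * Y n)"
    have "Sc v' e1"
    proof -
      have a: "Sc (\<lambda>n. 2 * V n) e1" using Sc_cmult[OF V] by simp
      have b: "Sc (\<lambda>n. real n powr (-g) * (W n)^2) e1"
        using Sc_mono[OF Sc_mult[OF Sc_powr[of g] Sc_mult[OF W0 W0]]] e1 2 by (simp add: power2_eq_square)
      have c: "Sc (\<lambda>n. (g + U n) * Y n) e1"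
        using Sc_mono[OF Sc_mult[OF Sc_add[OF Sc_const U0] Y]] e1 2 by simp
      show ?thesis unfolding v'_def by (intro Sc_add a b c U)
    qed
    moreover have "eventually (\<lambda>n. (1 + h (Suc n))^2 * Rq h n - 1 = real n powr (-(min g 2)) * ((2 * C + 2) + v' n)) sequentially"
      using key[of "\<lambda>n. (real n)^2"] WV ev_pos
    proof eventually_elim
      case (elim n)
      have f1: "(real n)^2 * real n powr (-g) = 1" using elim 2 by (simp add: powr_minus)
      have f2: "(real n)^2 * real n powr (-2) = 1" using elim by (simp add: powr_minus)
      have f3: "real n powr (-2) * real n powr 2 = 1" "real n powr (-2) * (real n)^2 = 1"
        using f2 elim by (simp_all add: mult.commute)
      have "real n powr (-2) * ((2 * C + 2) + v' n) = real n powr (-2) * ((real n)^2 * ((1 + h (Suc n))^2 * Rq h n - 1))"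
        unfolding elim(1) f1 f2 v'_def Y_def elim(2) using 2 by (simp add: algebra_simps)
      also have "\<dots> = (1 + h (Suc n))^2 * Rq h n - 1" by (simp add: mult.assoc[symmetric] f3)
      finally show ?case using 2 by simp
    qed
    ultimately show ?thesis using C e1 by (intro exI[of _ "2*C+2"] exI[of _ v'] exI[of _ e1]) auto
  next
    case 3
    define v' where "v' = (\<lambda>n. 2 * real n powr (2 - g) * W n + real n powr (2 - g) * real n powr (-g) * (W n)^2 + U n + (g + U n) * Y n)"
    have "Sc v' (min e1 (g - 2))"
    proof -
      have a: "Sc (\<lambda>n. 2 * real n powr (2 - g) * W n) (min e1 (g - 2))"
        using Sc_mono[OF Sc_cmult[OF Sc_mult[OF Sc_powr[of "g-2"] W0]], of "min e1 (g - 2)" 2] by (simp add: mult.assoc)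
      have b: "Sc (\<lambda>n. real n powr (2 - g) * real n powr (-g) * (W n)^2) (min e1 (g - 2))"
        using Sc_mono[OF Sc_mult[OF Sc_mult[OF Sc_powr[of "g-2"] Sc_powr[of g]] Sc_mult[OF W0 W0]]] 3 g
        by (simp add: power2_eq_square)
      have c: "Sc (\<lambda>n. (g + U n) * Y n) (min e1 (g - 2))"
        using Sc_mono[OF Sc_mult[OF Sc_add[OF Sc_const U0] Y]] 3 by simp
      have d: "Sc U (min e1 (g - 2))" using Sc_mono[OF U] by simp
      show ?thesis unfolding v'_def by (intro Sc_add a b c d)
    qed
    moreover have "eventually (\<lambda>n. (1 + h (Suc n))^2 * Rq h n - 1 = real n powr (-(min g 2)) * (g + v' n)) sequentially"
      using key[of "\<lambda>n. (real n)^2"] ev_pos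
    proof eventually_elim
      case (elim n)
      have f1: "(real n)^2 * real n powr (-g) = real n powr (2 - g)"
        using powr_add[of "real n" 2 "-g"] elim by simp
      have f2: "(real n)^2 * real n powr (-2) = 1" using elim by (simp add: powr_minus)
      have f3: "real n powr (-2) * real n powr 2 = 1" "real n powr (-2) * (real n)^2 = 1"
        using f2 elim by (simp_all add: mult.commute)
      have "real n powr (-2) * (g + v' n) = real n powr (-2) * ((real n)^2 * ((1 + h (Suc n))^2 * Rq h n - 1))"
        unfolding elim(1) f1 f2 v'_def Y_def by (simp add: algebra_simps)
      also have "\<dots> = (1 + h (Suc n))^2 * Rq h n - 1" by (simp add: mult.assoc[symmetric] f3)
      finally show ?case using 3 by simp
    qed
    ultimately show ?thesis using e1 g 3 by (intro exI[of _ g] exI[of _ v'] exI[of _ "min e1 (g - 2)"]) auto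
  qed
qed



definition so :: "(nat \<Rightarrow> real) \<Rightarrow> real \<Rightarrow> bool" where
  "so u d \<longleftrightarrow> (\<lambda>n. real n powr d * u n) \<longlonglongrightarrow> 0"

lemma tendsto_bdd: "(u::nat\<Rightarrow>real) \<longlonglongrightarrow> l \<Longrightarrow> \<exists>K. eventually (\<lambda>n. \<bar>u n\<bar> \<le> K) sequentially"
proof -
  assume "u \<longlonglongrightarrow> l"
  then have "eventually (\<lambda>n. dist (u n) l < 1) sequentially" by (intro tendstoD) auto
  then have "eventually (\<lambda>n. \<bar>u n\<bar> \<le> \<bar>l\<bar> + 1) sequentially"
    by eventually_elim (auto simp: dist_real_def)
  then show ?thesis by blast
qed

lemma lim0_cmp':
  "h \<longlonglongrightarrow> l \<Longrightarrow> l = 0 \<Longrightarrow> eventually (\<lambda>n. \<bar>g n\<bar> \<le> h n) sequentially \<Longrightarrow> g \<longlonglongrightarrow> (0::real)"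
  using lim0_cmp by blast

lemma so_add: "so u d \<Longrightarrow> so w d \<Longrightarrow> so (\<lambda>n. u n + w n) d"
  unfolding so_def using tendsto_add[of "\<lambda>n. real n powr d * u n" 0 _ "\<lambda>n. real n powr d * w n" 0]
  by (simp add: algebra_simps)

lemma so_diff: "so u d \<Longrightarrow> so w d \<Longrightarrow> so (\<lambda>n. u n - w n) d"
  unfolding so_def using tendsto_diff[of "\<lambda>n. real n powr d * u n" 0 _ "\<lambda>n. real n powr d * w n" 0]
  by (simp add: algebra_simps)

lemma so_cong_ev: "so u d \<Longrightarrow> eventually (\<lambda>n. u n = w n) sequentially \<Longrightarrow> so w d"
  unfolding so_def by (rule Lim_transform_eventually) (auto elim: eventually_mono)

lemma so_mult_bdd:
  assumes "so u d" "eventually (\<lambda>n. \<bar>w n\<bar> \<le> K) sequentially"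
  shows "so (\<lambda>n. u n * w n) d"
proof -
  have "(\<lambda>n. \<bar>K\<bar> * \<bar>real n powr d * u n\<bar>) \<longlonglongrightarrow> \<bar>K\<bar> * \<bar>0\<bar>"
    using assms(1) unfolding so_def by (intro tendsto_mult tendsto_const tendsto_rabs)
  then show ?thesis unfolding so_def
  proof (rule lim0_cmp', simp)
    show "eventually (\<lambda>n. \<bar>real n powr d * (u n * w n)\<bar> \<le> \<bar>K\<bar> * \<bar>real n powr d * u n\<bar>) sequentially"
      using assms(2)
    proof eventually_elim
      case (elim n)
      have "\<bar>real n powr d * (u n * w n)\<bar> = \<bar>real n powr d * u n\<bar> * \<bar>w n\<bar>" by (simp add: abs_mult)
      also have "\<dots> \<le> \<bar>real n powr d * u n\<bar> * \<bar>K\<bar>" using elim by (intro mult_left_mono) auto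
      finally show ?case by (simp add: mult.commute)
    qed
  qed
qed

lemma so_mono:
  assumes "so u d" "d' \<le> d" shows "so u d'"
proof -
  have "(\<lambda>n. \<bar>real n powr d * u n\<bar>) \<longlonglongrightarrow> \<bar>0\<bar>" using assms(1) unfolding so_def by (intro tendsto_rabs)
  then show ?thesis unfolding so_def
  proof (rule lim0_cmp', simp)
    show "eventually (\<lambda>n. \<bar>real n powr d' * u n\<bar> \<le> \<bar>real n powr d * u n\<bar>) sequentially"
      using eventually_ge_at_top[of 1]
    proof eventually_elim
      case (elim n)
      have "real n powr d' \<le> real n powr d" using elim assms(2) by (intro powr_mono) auto
      then show ?case by (simp add: abs_mult mult_right_mono)
    qed
  qed
qed

lemma so_shift:
  assumes "so u d" shows "so (\<lambda>n. u (Suc n)) d"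
proof -
  have "(\<lambda>n. real (Suc n) powr d * u (Suc n)) \<longlonglongrightarrow> 0"
    using assms unfolding so_def by (rule LIMSEQ_Suc)
  then have "(\<lambda>n. 2 powr \<bar>d\<bar> * \<bar>real (Suc n) powr d * u (Suc n)\<bar>) \<longlonglongrightarrow> 2 powr \<bar>d\<bar> * \<bar>0\<bar>"
    by (intro tendsto_mult tendsto_const tendsto_rabs)
  then show ?thesis unfolding so_def
  proof (rule lim0_cmp', simp)
    show "eventually (\<lambda>n. \<bar>real n powr d * u (Suc n)\<bar> \<le> 2 powr \<bar>d\<bar> * \<bar>real (Suc n) powr d * u (Suc n)\<bar>) sequentially"
      using eventually_ge_at_top[of 1]
    proof eventually_elim
      case (elim n)
      have a: "real (Suc n) powr (-d) \<le> 2 powr \<bar>d\<bar> * real n powr (-d)"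
        using powr_shift_le[OF elim, of "-d"] by simp
      have "real n powr d = 1 / real n powr (-d)" using elim by (simp add: powr_minus divide_inverse)
      also have "\<dots> \<le> 2 powr \<bar>d\<bar> / real (Suc n) powr (-d)"
        using a elim by (simp add: field_simps)
      also have "\<dots> = 2 powr \<bar>d\<bar> * real (Suc n) powr d" by (simp add: powr_minus divide_inverse)
      finally have "real n powr d \<le> 2 powr \<bar>d\<bar> * real (Suc n) powr d" .
      then have "real n powr d * \<bar>u (Suc n)\<bar> \<le> (2 powr \<bar>d\<bar> * real (Suc n) powr d) * \<bar>u (Suc n)\<bar>"
        by (intro mult_right_mono) auto
      then show ?case by (simp add: abs_mult mult.assoc)
    qed
  qed
qed

lemma so_0: "so u 0 \<longleftrightarrow> u \<longlonglongrightarrow> 0"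
proof -
  have "eventually (\<lambda>n. real n powr 0 * u n = u n) sequentially"
    using ev_pos by eventually_elim simp
  then show ?thesis unfolding so_def by (intro tendsto_cong) auto
qed

lemma so_tendsto0: "so u d \<Longrightarrow> d \<ge> 0 \<Longrightarrow> u \<longlonglongrightarrow> 0"
  using so_mono[of u d 0] so_0 by auto

lemma so_mult: "so u d \<Longrightarrow> w \<longlonglongrightarrow> l \<Longrightarrow> so (\<lambda>n. u n * w n) d"
  using tendsto_bdd so_mult_bdd by blast




lemma Lop_eq: "b (Suc n) \<noteq> 0 \<Longrightarrow> Lop b n = (b (Suc n))^2 * (Rq b n - 1)"
  by (simp add: Lop_def Rq_def field_simps)

lemma Rq_Lop:
  assumes "b (Suc n) \<noteq> 0" "b (Suc (Suc n)) \<noteq> 0" "b (Suc (Suc (Suc n))) \<noteq> 0" "Rq b (Suc n) - 1 \<noteq> 0"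
  shows "Rq (Lop b) n = (1 + (Rq b (Suc n) - 1))^2 * Rq (\<lambda>k. Rq b k - 1) n"
proof -
  have L: "Lop b n = (b (Suc n))^2 * (Rq b n - 1)" "Lop b (Suc n) = (b (Suc (Suc n)))^2 * (Rq b (Suc n) - 1)"
    "Lop b (Suc (Suc n)) = (b (Suc (Suc (Suc n))))^2 * (Rq b (Suc (Suc n)) - 1)"
    using assms by (simp_all add: Lop_eq)
  have R1: "1 + (Rq b (Suc n) - 1) = b (Suc n) * b (Suc (Suc (Suc n))) / (b (Suc (Suc n)))^2"
    by (simp add: Rq_def)
  show ?thesis unfolding R1 unfolding Rq_def[of "Lop b"] Rq_def[of "\<lambda>k. Rq b k - 1"]
    using assms by (simp add: L field_simps power2_eq_square)
qed

lemma Inv_step: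
  fixes b v :: "nat \<Rightarrow> real"
  assumes bpos: "eventually (\<lambda>n. b n > 0) sequentially" and g: "g > 0" and dg: "d \<ge> g"
    and C: "C > 0" and e: "e > 0" and v: "Sc v e"
    and E: "so (\<lambda>n. Rq b n - 1 - real n powr (-g) * (C + v n)) d"
  shows "eventually (\<lambda>n. Lop b n > 0) sequentially \<and>
    (\<exists>C' v' e'. C' > 0 \<and> e' > 0 \<and> Sc v' e' \<and>
      so (\<lambda>n. Rq (Lop b) n - 1 - real n powr (-(min g 2)) * (C' + v' n)) (d - g))"
proof -
  define x where "x = (\<lambda>n. Rq b n - 1)"
  define h where "h = (\<lambda>k. real k powr (-g) * (C + v k))"
  define Ee where "Ee = (\<lambda>n. x n - h n)"
  define eps where "eps = (\<lambda>n. Ee n / h n)"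
  have Ee: "so Ee d" using E by (simp add: Ee_def x_def h_def)
  have v0: "v \<longlonglongrightarrow> 0" by (rule Sc_tendsto0[OF v e])
  have Cv: "(\<lambda>n. C + v n) \<longlonglongrightarrow> C" using tendsto_add[OF tendsto_const v0, of C] by simp
  have Cvge: "eventually (\<lambda>n. C + v n \<ge> C / 2) sequentially" by (rule ev_ge_of_tendsto0[OF v0 C])
  have hpos: "eventually (\<lambda>n. h n > 0) sequentially"
    using Cvge ev_pos by eventually_elim (use C in \<open>auto simp: h_def\<close>)
  have pw0: "(\<lambda>n. real n powr (-g)) \<longlonglongrightarrow> 0"
    by (intro tendsto_neg_powr filterlim_real_sequentially) (use g in auto)
  have h0: "h \<longlonglongrightarrow> 0" unfolding h_def using tendsto_mult[OF pw0 Cv] by simp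
  have E0: "Ee \<longlonglongrightarrow> 0" using so_tendsto0[OF Ee] dg g by simp
  have x0: "x \<longlonglongrightarrow> 0" using tendsto_add[OF h0 E0] by (simp add: Ee_def)
  have epsso: "so eps (d - g)"
  proof -
    have "(\<lambda>n. real n powr d * Ee n / (C + v n)) \<longlonglongrightarrow> 0 / C"
      using Ee C unfolding so_def by (intro tendsto_divide Cv) auto
    then have "(\<lambda>n. real n powr d * Ee n / (C + v n)) \<longlonglongrightarrow> 0" by simp
    then show ?thesis unfolding so_def
    proof (rule Lim_transform_eventually)
      show "eventually (\<lambda>n. real n powr d * Ee n / (C + v n) = real n powr (d - g) * eps n) sequentially"
        using ev_pos
      proof eventually_elim
        case (elim n)
        have "real n powr (d - g) = real n powr d * real n powr (-g)"
          using powr_add[of "real n" d "-g"] by simp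
        then have "real n powr (d - g) * eps n = (real n powr d * Ee n * real n powr (-g)) / ((C + v n) * real n powr (-g))"
          unfolding eps_def h_def by (simp add: mult_ac)
        also have "\<dots> = real n powr d * Ee n / (C + v n)"
          using elim by (intro mult_divide_mult_cancel_right) auto
        finally show ?case by simp
      qed
    qed
  qed
  have eps0: "eps \<longlonglongrightarrow> 0" using so_tendsto0[OF epsso] dg by simp
  have epsb: "eventually (\<lambda>n. \<bar>eps n\<bar> < 1/2) sequentially"
    using tendstoD[OF eps0, of "1/2"] by (auto simp: dist_real_def)
  have xh: "eventually (\<lambda>n. x n = h n * (1 + eps n)) sequentially"
    using hpos by eventually_elim (auto simp: eps_def Ee_def field_simps)
  have xpos: "eventually (\<lambda>n. x n > 0) sequentially"
    using xh hpos epsb by eventually_elim (auto intro!: mult_pos_pos)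
  have Lpos: "eventually (\<lambda>n. Lop b n > 0) sequentially"
    using eventually_sequentially_Suc[THEN iffD2, OF bpos] xpos
    by eventually_elim (auto simp: Lop_eq x_def)
  obtain C' v' e' where sm: "C' > 0" "e' > 0" "Sc v' e'"
    "eventually (\<lambda>n. (1 + h (Suc n))^2 * Rq h n - 1 = real n powr (-(min g 2)) * (C' + v' n)) sequentially"
    using smooth_step[OF g C e v] unfolding h_def by blast
  define rho where "rho = (\<lambda>n. Rq (\<lambda>k. 1 + eps k) n)"
  have Rh1: "(\<lambda>n. Rq h n) \<longlonglongrightarrow> 1"
  proof -
    define Z where "Z = (\<lambda>n. real n ^ 2 * (Rq h n - 1) - g)"
    have Z: "Sc Z (min 1 e)" unfolding Z_def h_def by (rule R_h[OF v e C])
    have Z0: "Z \<longlonglongrightarrow> 0" using Sc_tendsto0[OF Z] e by simp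
    have p2: "(\<lambda>n. real n powr (-2)) \<longlonglongrightarrow> 0"
      by (intro tendsto_neg_powr filterlim_real_sequentially) auto
    have "(\<lambda>n. 1 + real n powr (-2) * (g + Z n)) \<longlonglongrightarrow> 1 + 0 * (g + 0)"
      by (intro tendsto_intros p2 Z0)
    then have "(\<lambda>n. 1 + real n powr (-2) * (g + Z n)) \<longlonglongrightarrow> 1" by simp
    then show ?thesis
    proof (rule Lim_transform_eventually)
      show "eventually (\<lambda>n. 1 + real n powr (-2) * (g + Z n) = Rq h n) sequentially"
        using ev_pos
      proof eventually_elim
        case (elim n)
        have "real n powr (-2) = 1 / real n ^ 2" using elim by (simp add: powr_minus_divide)
        then show ?case unfolding Z_def using elim by (simp add: field_simps)
      qed
    qed
  qed
  have rho1: "so (\<lambda>n. rho n - 1) (d - g)"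
  proof -
    have e1: "so (\<lambda>n. eps (Suc n)) (d - g)" by (rule so_shift[OF epsso])
    have e2: "so (\<lambda>n. eps (Suc (Suc n))) (d - g)" by (rule so_shift[OF e1])
    have e1t: "(\<lambda>n. eps (Suc n)) \<longlonglongrightarrow> 0" using LIMSEQ_Suc[OF eps0] .
    have e2t: "(\<lambda>n. eps (Suc (Suc n))) \<longlonglongrightarrow> 0" using LIMSEQ_Suc[OF e1t] .
    have num: "so (\<lambda>n. eps n + eps (Suc (Suc n)) + eps n * eps (Suc (Suc n)) - eps (Suc n) * 2 - eps (Suc n) * eps (Suc n)) (d - g)"
      by (intro so_diff so_add epsso e2 so_mult[OF epsso e2t] so_mult[OF e1 tendsto_const] so_mult[OF e1 e1t])
    have den: "(\<lambda>n. 1 / (1 + eps (Suc n))^2) \<longlonglongrightarrow> 1 / (1 + 0)^2"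
      by (intro tendsto_intros e1t) auto
    have "so (\<lambda>n. (eps n + eps (Suc (Suc n)) + eps n * eps (Suc (Suc n)) - eps (Suc n) * 2 - eps (Suc n) * eps (Suc n)) * (1 / (1 + eps (Suc n))^2)) (d - g)"
      by (rule so_mult[OF num den])
    then show ?thesis
    proof (rule so_cong_ev)
      show "eventually (\<lambda>n. (eps n + eps (Suc (Suc n)) + eps n * eps (Suc (Suc n)) - eps (Suc n) * 2 - eps (Suc n) * eps (Suc n)) * (1 / (1 + eps (Suc n))^2) = rho n - 1) sequentially"
        using eventually_sequentially_Suc[THEN iffD2, OF epsb]
      proof eventually_elim
        case (elim n)
        then have y: "(1 + eps (Suc n))^2 \<noteq> 0" by auto
        have r: "rho n - 1 = ((1 + eps n) * (1 + eps (Suc (Suc n))) - (1 + eps (Suc n))^2) / (1 + eps (Suc n))^2"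
          unfolding rho_def Rq_def using y by (simp add: diff_divide_distrib)
        have nm: "eps n + eps (Suc (Suc n)) + eps n * eps (Suc (Suc n)) - eps (Suc n) * 2 - eps (Suc n) * eps (Suc n)
           = (1 + eps n) * (1 + eps (Suc (Suc n))) - (1 + eps (Suc n))^2"
          by (simp add: algebra_simps power2_eq_square)
        show ?case unfolding r nm by simp
      qed
    qed
  qed
  have S1: "so (\<lambda>n. (1 + x (Suc n))^2 * (rho n - 1)) (d - g)"
  proof -
    have "(\<lambda>n. (1 + x (Suc n))^2) \<longlonglongrightarrow> (1 + 0)^2" by (intro tendsto_intros LIMSEQ_Suc[OF x0])
    then have "so (\<lambda>n. (rho n - 1) * (1 + x (Suc n))^2) (d - g)" using so_mult[OF rho1] by simp
    then show ?thesis by (simp add: mult.commute)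
  qed
  have S2: "so (\<lambda>n. Ee (Suc n) * (2 + x (Suc n) + h (Suc n))) (d - g)"
  proof -
    have "so (\<lambda>n. Ee (Suc n)) (d - g)" using so_shift[OF so_mono[OF Ee]] g by simp
    moreover have "(\<lambda>n. 2 + x (Suc n) + h (Suc n)) \<longlonglongrightarrow> 2 + 0 + 0"
      by (intro tendsto_intros LIMSEQ_Suc[OF x0] LIMSEQ_Suc[OF h0])
    ultimately show ?thesis using so_mult by blast
  qed
  have S: "so (\<lambda>n. ((1 + x (Suc n))^2 * (rho n - 1) + Ee (Suc n) * (2 + x (Suc n) + h (Suc n))) * Rq h n) (d - g)"
    by (rule so_mult[OF so_add[OF S1 S2] Rh1])
  have "so (\<lambda>n. Rq (Lop b) n - 1 - real n powr (-(min g 2)) * (C' + v' n)) (d - g)"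
    using S
  proof (rule so_cong_ev)
    have bs: "eventually (\<lambda>n. b (Suc n) > 0 \<and> b (Suc (Suc n)) > 0 \<and> b (Suc (Suc (Suc n))) > 0) sequentially"
      using bpos by (simp add: eventually_sequentially) (metis le_SucI)
    have xs: "eventually (\<lambda>n. x (Suc n) > 0) sequentially"
      using xpos by (rule eventually_sequentially_Suc[THEN iffD2])
    have xhs: "eventually (\<lambda>n. x n = h n * (1 + eps n) \<and> x (Suc n) = h (Suc n) * (1 + eps (Suc n)) \<and>
        x (Suc (Suc n)) = h (Suc (Suc n)) * (1 + eps (Suc (Suc n)))) sequentially"
      using xh by (simp add: eventually_sequentially) (metis le_SucI)
    show "eventually (\<lambda>n. ((1 + x (Suc n))^2 * (rho n - 1) + Ee (Suc n) * (2 + x (Suc n) + h (Suc n))) * Rq h n =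
        Rq (Lop b) n - 1 - real n powr (-(min g 2)) * (C' + v' n)) sequentially"
      using bs xs xhs sm(4)
    proof eventually_elim
      case (elim n)
      have RL: "Rq (Lop b) n = (1 + x (Suc n))^2 * Rq x n"
        unfolding x_def using elim(1,2) by (intro Rq_Lop) (auto simp: x_def)
      have Rx: "Rq x n = Rq h n * rho n"
        unfolding rho_def Rq_def using elim(3) by (simp add: field_simps power2_eq_square)
      have Es: "Ee (Suc n) = x (Suc n) - h (Suc n)" by (simp add: Ee_def)
      show ?case unfolding RL Rx elim(4)[symmetric] Es by (simp add: algebra_simps power2_eq_square)
    qed
  qed
  with Lpos sm show ?thesis by blast
qed



definition Q :: "(nat \<Rightarrow> real) \<Rightarrow> real \<Rightarrow> real \<Rightarrow> bool" where
  "Q b g d \<longleftrightarrow> eventually (\<lambda>n. b n > 0) sequentially \<and>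
     (\<exists>C v e. C > 0 \<and> e > 0 \<and> Sc v e \<and> so (\<lambda>n. Rq b n - 1 - real n powr (-g) * (C + v n)) d)"

lemma Q_step: "Q b g d \<Longrightarrow> g > 0 \<Longrightarrow> d \<ge> g \<Longrightarrow> Q (Lop b) (min g 2) (d - g)"
  unfolding Q_def using Inv_step by blast

lemma levels:
  fixes \<alpha> \<beta> :: real
  assumes Q0: "Q a \<alpha> \<beta>" and al: "\<alpha> > 0"
  defines "gk \<equiv> \<lambda>k::nat. if k = 0 then \<alpha> else min \<alpha> 2"
  defines "dk \<equiv> \<lambda>k::nat. if k = 0 then \<beta> else \<beta> - \<alpha> - (real k - 1) * min \<alpha> 2"
  shows "(\<forall>j<k. dk j \<ge> gk j) \<Longrightarrow> Q ((Lop ^^ k) a) (gk k) (dk k)"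
proof (induction k)
  case 0 then show ?case using Q0 by (simp add: gk_def dk_def)
next
  case (Suc k)
  then have IH: "Q ((Lop ^^ k) a) (gk k) (dk k)" by auto
  have gpos: "gk k > 0" using al by (simp add: gk_def)
  have dg: "dk k \<ge> gk k" using Suc.prems by auto
  have "Q (Lop ((Lop ^^ k) a)) (min (gk k) 2) (dk k - gk k)" by (rule Q_step[OF IH gpos dg])
  moreover have "min (gk k) 2 = gk (Suc k)" by (simp add: gk_def)
  moreover have "dk k - gk k = dk (Suc k)" by (simp add: gk_def dk_def algebra_simps)
  ultimately show ?case by simp
qed



theorem mainTheorem2:
  fixes a :: "nat \<Rightarrow> real" and c \<alpha> \<beta> :: real
    and m :: nat and alph cs :: "nat \<Rightarrow> real"
  assumes pos: "\<And>n. a n > 0"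
    and c_pos: "c > 0" and alpha_pos: "0 < \<alpha>" and alpha_le_beta: "\<alpha> \<le> \<beta>"
    and m_ge: "m \<ge> 1"
    and alph1: "alph 1 = \<alpha>" and cs1: "cs 1 = c"
    and alph_mono: "\<And>i j. 1 \<le> i \<Longrightarrow> i < j \<Longrightarrow> j \<le> m \<Longrightarrow> alph i < alph j"
    and approx: "(\<lambda>n. real n powr \<beta> *
         (a n * a (n + 2) / (a (n + 1))\<^sup>2 - 1 - (\<Sum>i=1..m. cs i * real n powr (- alph i))))
         \<longlonglongrightarrow> 0"
  shows "asymp_r_log_convex
           (if \<alpha> < 2 then nat \<lfloor>\<beta> / \<alpha>\<rfloor> else nat \<lfloor>(\<beta> - \<alpha>) / 2\<rfloor> + 1) a"
proof -
  define r where "r = (if \<alpha> < 2 then nat \<lfloor>\<beta> / \<alpha>\<rfloor> else nat \<lfloor>(\<beta> - \<alpha>) / 2\<rfloor> + 1)"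
  define gk where "gk = (\<lambda>k::nat. if k = 0 then \<alpha> else min \<alpha> 2)"
  define dk where "dk = (\<lambda>k::nat. if k = 0 then \<beta> else \<beta> - \<alpha> - (real k - 1) * min \<alpha> 2)"
  define v where "v = (\<lambda>n. \<Sum>i=2..m. cs i * real n powr (\<alpha> - alph i))"
  define e0 where "e0 = Min (insert 1 ((\<lambda>i. alph i - \<alpha>) ` {2..m}))"
  have fin: "finite (insert 1 ((\<lambda>i. alph i - \<alpha>) ` {2..m}))" by simp
  have gt: "alph i - \<alpha> > 0" if "i \<in> {2..m}" for i
    using alph_mono[of 1 i] that alph1 by auto
  have e0: "e0 > 0" unfolding e0_def using fin gt by (subst Min_gr_iff) auto
  have e0le: "e0 \<le> alph i - \<alpha>" if "i \<in> {2..m}" for i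
    unfolding e0_def using fin that by (intro Min_le) auto
  have v: "Sc v e0" unfolding v_def
  proof (rule Sc_sum, simp)
    fix i assume i: "i \<in> {2..m}"
    show "Sc (\<lambda>n. cs i * real n powr (\<alpha> - alph i)) e0"
      using Sc_cmult[OF Sc_mono[OF Sc_powr'[of "\<alpha> - alph i"]], of e0 "cs i"] e0le[OF i] by simp
  qed
  have Q0: "Q a \<alpha> \<beta>"
    unfolding Q_def
  proof (intro conjI exI)
    show "eventually (\<lambda>n. a n > 0) sequentially" using pos by simp
    show "so (\<lambda>n. Rq a n - 1 - real n powr (-\<alpha>) * (c + v n)) \<beta>"
      unfolding so_def using approx
    proof (rule Lim_transform_eventually)
      show "eventually (\<lambda>n. real n powr \<beta> *
         (a n * a (n + 2) / (a (n + 1))\<^sup>2 - 1 - (\<Sum>i=1..m. cs i * real n powr (- alph i))) =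
         real n powr \<beta> * (Rq a n - 1 - real n powr (-\<alpha>) * (c + v n))) sequentially"
        using ev_pos
      proof eventually_elim
        case (elim n)
        have s1: "(\<Sum>i=1..m. cs i * real n powr (- alph i)) = cs 1 * real n powr (- alph 1) + (\<Sum>i=2..m. cs i * real n powr (- alph i))"
          using m_ge by (simp add: sum.atLeast_Suc_atMost numeral_2_eq_2)
        have s2: "real n powr (-\<alpha>) * v n = (\<Sum>i=2..m. cs i * real n powr (- alph i))"
          unfolding v_def sum_distrib_left
        proof (rule sum.cong[OF refl])
          fix i
          have "real n powr (-\<alpha>) * real n powr (\<alpha> - alph i) = real n powr (- alph i)"
            using powr_add[of "real n" "-\<alpha>" "\<alpha> - alph i"] by simp
          then show "real n powr (-\<alpha>) * (cs i * real n powr (\<alpha> - alph i)) = cs i * real n powr (- alph i)"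
            by (simp add: mult_ac)
        qed
        show ?case unfolding s1 Rq_def alph1 cs1 using s2 by (simp add: algebra_simps)
      qed
    qed
  qed (use c_pos e0 v in auto)
  have lev: "Q ((Lop ^^ k) a) (gk k) (dk k)" if "\<forall>j<k. dk j \<ge> gk j" for k
    using levels[OF Q0 alpha_pos, of k] that unfolding gk_def dk_def by blast
  have cond: "\<forall>j<k. dk j \<ge> gk j" if k: "k \<in> {1..r}" for k
  proof safe
    fix j assume j: "j < k"
    show "gk j \<le> dk j"
    proof (cases "j = 0")
      case True then show ?thesis using alpha_le_beta by (simp add: gk_def dk_def)
    next
      case False
      then have j1: "real j \<ge> 1" by simp
      show ?thesis
      proof (cases "\<alpha> < 2")
        case True
        then have "j + 1 \<le> nat \<lfloor>\<beta> / \<alpha>\<rfloor>" using k j by (simp add: r_def)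
        then have "real (j + 1) \<le> real (nat \<lfloor>\<beta> / \<alpha>\<rfloor>)" by linarith
        also have "\<dots> \<le> \<beta> / \<alpha>"
          using alpha_le_beta alpha_pos by (intro of_nat_floor) simp
        finally have "(real j + 1) * \<alpha> \<le> \<beta>" using alpha_pos by (simp add: field_simps)
        then show ?thesis using True False by (simp add: gk_def dk_def algebra_simps)
      next
        case False2: False
        then have "j \<le> nat \<lfloor>(\<beta> - \<alpha>) / 2\<rfloor>" using k j by (simp add: r_def)
        then have "real j \<le> real (nat \<lfloor>(\<beta> - \<alpha>) / 2\<rfloor>)" by linarith
        also have "\<dots> \<le> (\<beta> - \<alpha>) / 2"
          using alpha_le_beta by (intro of_nat_floor) simp
        finally have "2 * real j \<le> \<beta> - \<alpha>" by simp
        then show ?thesis using False2 False by (simp add: gk_def dk_def algebra_simps)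
      qed
    qed
  qed
  have "eventually (\<lambda>n. \<forall>k\<in>{1..r}. (Lop ^^ k) a n > 0) sequentially"
  proof (rule eventually_ball_finite[OF finite_atLeastAtMost], rule ballI)
    fix k assume "k \<in> {1..r}"
    then show "eventually (\<lambda>n. (Lop ^^ k) a n > 0) sequentially"
      using lev[OF cond] unfolding Q_def by blast
  qed
  then obtain N where "\<forall>n\<ge>N. \<forall>k\<in>{1..r}. (Lop ^^ k) a n > 0" by (auto simp: eventually_sequentially)
  then have "asymp_r_log_convex r a" unfolding asymp_r_log_convex_def by (auto intro!: exI[of _ N] less_imp_le)
  then show ?thesis by (simp add: r_def)
qed


end
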